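(* There exists a sequence of functions $f_1, f_2, \ldots : \mathbb{R}^2 \to \{-1,1\}$ such that: (a) For every fixed depth $d \geq 1$ there is a constant $b > 1$ (depending only on $d$) such that for every $m$, every ReLU MLP classifier with input in $\mathbb{R}^2$, $d$ hidden layers and all hidden layers of width $w$ that computes $f_m$ exactly (i.e. outputs $f_m(x)$ for every $x \in \mathbb{R}^2$) satisfies $w \geq b^m$. (b) For every $m$ there is a ReLU MLP classifier with a number of parameters linear in $m$ that computes $f_m$ exactly; concretely, one with depth $m+2$ and every hidden layer of width at most $4$.
   Context: Let $\sigma(t) = \max\{0,t\}$ act elementwise. A ReLU MLP classifier with input in $\mathbb{R}^2$, $d$ hidden layers and hidden widths $w_1,\dots,w_d$ is a map $F:\mathbb{R}^2 \to \{-1,1\}$ of the form $h_0 = x$, $h_i = \sigma(A_i h_{i-1} + c_i)$ for $i=1,\dots,d$ (with $A_i \in \mathbb{R}^{w_i \times w_{i-1}}$, $w_0 = 2$, $c_i \in \mathbb{R}^{w_i}$), and $F(x) = 1$ if $v^\top h_d + v_0 > 0$ and $F(x) = -1$ otherwise, for some $v \in \mathbb{R}^{w_d}$, $v_0 \in \mathbb{R}$. Its depth is the number of hidden layers $d$; layers of smaller width are regarded as width-$w$ layers with some zero parameters. *)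

theory Defs
  imports Main "HOL.Real"
begin

text \<open>A hidden layer is a triple (w, A, c): output width w, weight matrix A
(entry A i j for i < w and j < previous width) and bias c (entry c i, i < w).
Vectors are represented as functions nat => real; coordinates at or beyond the
width are irrelevant (hidden activations are set to 0 there).\<close>

type_synonym layer = "nat \<times> (nat \<Rightarrow> nat \<Rightarrow> real) \<times> (nat \<Rightarrow> real)"

definition relu :: "real \<Rightarrow> real" where
  "relu t = max 0 t"

definition layer_apply :: "nat \<Rightarrow> layer \<Rightarrow> (nat \<Rightarrow> real) \<Rightarrow> (nat \<Rightarrow> real)" where
  "layer_apply w0 L h =
     (case L of (w, A, c) \<Rightarrow>
        (\<lambda>i. if i < w then relu ((\<Sum>j<w0. A i j * h j) + c i) else 0))"

fun mlp_forward :: "nat \<Rightarrow> layer list \<Rightarrow> (nat \<Rightarrow> real) \<Rightarrow> nat \<times> (nat \<Rightarrow> real)" where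
  "mlp_forward w0 [] h = (w0, h)"
| "mlp_forward w0 (L # Ls) h = mlp_forward (fst L) Ls (layer_apply w0 L h)"

definition input_vec :: "real \<times> real \<Rightarrow> (nat \<Rightarrow> real)" where
  "input_vec x = (\<lambda>i. if i = 0 then fst x else if i = 1 then snd x else 0)"

definition mlp_classifier ::
  "layer list \<Rightarrow> (nat \<Rightarrow> real) \<Rightarrow> real \<Rightarrow> real \<times> real \<Rightarrow> int" where
  "mlp_classifier Ls v v0 x =
     (case mlp_forward 2 Ls (input_vec x) of (wd, h) \<Rightarrow>
        if (\<Sum>i<wd. v i * h i) + v0 > 0 then 1 else -1)"

end

theory Submission
  imports Defs Complex_Main
begin


definition pl :: "real set \<Rightarrow> (real \<Rightarrow> real) \<Rightarrow> bool" where
  "pl B g \<longleftrightarrow> finite B \<and> (\<forall>x y z. x < y \<longrightarrow> y < z \<longrightarrow> (\<forall>b\<in>B. \<not> (x < b \<and> b < z)) \<longrightarrow>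
      g y = ((z - y) * g x + (y - x) * g z) / (z - x))"

lemma plD: "pl B g \<Longrightarrow> x < y \<Longrightarrow> y < z \<Longrightarrow> (\<And>b. b\<in>B \<Longrightarrow> \<not> (x < b \<and> b < z)) \<Longrightarrow>
      g y = ((z - y) * g x + (y - x) * g z) / (z - x)"
  unfolding pl_def by blast

lemma pl_mono: "pl B g \<Longrightarrow> B \<subseteq> B' \<Longrightarrow> finite B' \<Longrightarrow> pl B' g"
  unfolding pl_def by blast

lemma pl_const: "finite B \<Longrightarrow> pl B (\<lambda>t. k)"
  unfolding pl_def by (auto simp: field_simps)

lemma pl_id: "finite B \<Longrightarrow> pl B (\<lambda>t. t)"
  unfolding pl_def by (auto simp: field_simps)

lemma pl_add:
  assumes "pl B f" "pl B g" shows "pl B (\<lambda>t. f t + g t)"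
  unfolding pl_def
proof (intro conjI allI impI)
  show "finite B" using assms pl_def by blast
  fix x y z assume h: "x < y" "y < z" "\<forall>b\<in>B. \<not> (x < b \<and> b < z)"
  have "f y = ((z - y) * f x + (y - x) * f z) / (z - x)" using plD[OF assms(1) h(1,2)] h(3) by blast
  moreover have "g y = ((z - y) * g x + (y - x) * g z) / (z - x)" using plD[OF assms(2) h(1,2)] h(3) by blast
  ultimately show "f y + g y = ((z - y) * (f x + g x) + (y - x) * (f z + g z)) / (z - x)"
    by (simp add: add_divide_distrib[symmetric] algebra_simps)
qed

lemma pl_scale:
  assumes "pl B f" shows "pl B (\<lambda>t. a * f t)"
  unfolding pl_def
proof (intro conjI allI impI)
  show "finite B" using assms pl_def by blast
  fix x y z assume h: "x < y" "y < z" "\<forall>b\<in>B. \<not> (x < b \<and> b < z)"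
  have "f y = ((z - y) * f x + (y - x) * f z) / (z - x)" using plD[OF assms(1) h(1,2)] h(3) by blast
  then show "a * f y = ((z - y) * (a * f x) + (y - x) * (a * f z)) / (z - x)"
    by (simp add: algebra_simps times_divide_eq_right[symmetric])
qed

lemma pl_sum: "finite B \<Longrightarrow> (\<And>j. j < n \<Longrightarrow> pl B (f j)) \<Longrightarrow> pl B (\<lambda>t. \<Sum>j<(n::nat). f j t)"
  by (induction n) (auto intro: pl_const pl_add)

lemma pl_alt:
  assumes "pl B g" "x < y" "y < z" "g x \<le> 0" "g y > 0" "g z \<le> 0"
  shows "\<exists>b\<in>B. x < b \<and> b < z"
proof (rule ccontr)
  assume "\<not> ?thesis"
  then have "g y = ((z - y) * g x + (y - x) * g z) / (z - x)"
    using plD[OF assms(1-3)] by blast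
  moreover have "((z - y) * g x + (y - x) * g z) / (z - x) \<le> 0"
    using assms by (intro divide_nonpos_pos add_nonpos_nonpos mult_nonneg_nonpos) auto
  ultimately show False using assms by simp
qed

definition zs :: "real set \<Rightarrow> (real \<Rightarrow> real) \<Rightarrow> real set" where
  "zs B g = {t. t \<notin> B \<and> g t = 0 \<and> (\<exists>s. g s \<noteq> 0 \<and> (\<forall>b\<in>B. \<not> (min t s < b \<and> b < max t s)))}"

lemma zs_inj_aux:
  assumes "pl B g" "z1 \<in> zs B g" "z2 \<in> zs B g" "z1 < z2"
    "card {b\<in>B. b < z1} = card {b\<in>B. b < z2}"
  shows False
proof -
  have fin: "finite B" using assms(1) pl_def by blast
  have sub: "{b\<in>B. b < z1} \<subseteq> {b\<in>B. b < z2}" using assms(4) by auto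
  have eq: "{b\<in>B. b < z1} = {b\<in>B. b < z2}"
    using card_subset_eq[OF _ sub] assms(5) fin by auto
  have z1B: "z1 \<notin> B" and z2B: "z2 \<notin> B" and g1: "g z1 = 0" and g2: "g z2 = 0"
    using assms(2,3) unfolding zs_def by auto
  have noB: "\<And>b. b \<in> B \<Longrightarrow> \<not> (z1 \<le> b \<and> b \<le> z2)"
  proof
    fix b assume b: "b \<in> B" "z1 \<le> b \<and> b \<le> z2"
    show False
    proof (cases "b = z2")
      case True then show False using z2B b by simp
    next
      case False
      then have "b \<in> {b\<in>B. b < z2}" using b by auto
      then have "b < z1" using eq by auto
      then show False using b by simp
    qed
  qed
  obtain s where s: "g s \<noteq> 0" "\<And>b. b\<in>B \<Longrightarrow> \<not> (min z1 s < b \<and> b < max z1 s)"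
    using assms(2) unfolding zs_def by blast
  consider "s < z1" | "s = z1" | "z1 < s \<and> s < z2" | "s = z2" | "z2 < s" by linarith
  then show False
  proof cases
    case 1
    have "g z1 = ((z2 - z1) * g s + (z1 - s) * g z2) / (z2 - s)"
    proof (rule plD[OF assms(1) 1 assms(4)])
      fix b assume b: "b \<in> B"
      show "\<not> (s < b \<and> b < z2)"
      proof
        assume h: "s < b \<and> b < z2"
        have "\<not> (s < b \<and> b < z1)" using s(2)[OF b] 1 by simp
        then show False using h noB[OF b] by linarith
      qed
    qed
    then show False using g1 g2 s(1) 1 assms(4) by simp
  next
    case 2 then show False using s g1 by simp
  next
    case 3
    have "g s = ((z2 - s) * g z1 + (s - z1) * g z2) / (z2 - z1)"
    proof (rule plD[OF assms(1)])
      fix b assume "b \<in> B"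
      then show "\<not> (z1 < b \<and> b < z2)" using noB[of b] by auto
    qed (use 3 in auto)
    then show False using g1 g2 s(1) by simp
  next
    case 4 then show False using s g2 by simp
  next
    case 5
    have "g z2 = ((s - z2) * g z1 + (z2 - z1) * g s) / (s - z1)"
      by (rule plD[OF assms(1) assms(4) 5]) (use s(2) 5 assms(4) in auto)
    then show False using g1 g2 s(1) 5 assms(4) by simp
  qed
qed

lemma zs_fin_card:
  assumes "pl B g"
  shows "finite (zs B g) \<and> card (zs B g) \<le> card B + 1"
proof -
  have fin: "finite B" using assms pl_def by blast
  define cnt where "cnt t = card {b\<in>B. b < t}" for t
  have inj: "inj_on cnt (zs B g)"
  proof (rule inj_onI)
    fix a c assume a: "a \<in> zs B g" and c: "c \<in> zs B g" and e: "cnt a = cnt c"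
    show "a = c"
    proof (rule ccontr)
      assume "a \<noteq> c"
      then consider "a < c" | "c < a" by linarith
      then show False
      proof cases
        case 1 then show False using zs_inj_aux[OF assms a c] e cnt_def by simp
      next
        case 2 then show False using zs_inj_aux[OF assms c a] e cnt_def by simp
      qed
    qed
  qed
  have img: "cnt ` zs B g \<subseteq> {..card B}"
  proof
    fix k assume "k \<in> cnt ` zs B g"
    then obtain t where "k = cnt t" by blast
    moreover have "card {b\<in>B. b < t} \<le> card B" using fin by (intro card_mono) auto
    ultimately show "k \<in> {..card B}" using cnt_def by simp
  qed
  have "finite (zs B g)" using inj_on_finite[OF inj img] by simp
  moreover have "card (zs B g) \<le> card {..card B}"
    using card_inj_on_le[OF inj img] by simp
  ultimately show ?thesis by simp
qed

lemma relu_nonneg: "x \<ge> 0 \<Longrightarrow> relu x = x" and relu_nonpos: "x \<le> 0 \<Longrightarrow> relu x = 0"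
  by (auto simp: relu_def)

lemma pl_relu:
  assumes "pl B g"
  shows "pl (B \<union> zs B g) (\<lambda>t. relu (g t))"
  unfolding pl_def
proof (intro conjI allI impI)
  have fin: "finite B" using assms pl_def by blast
  show "finite (B \<union> zs B g)" using fin zs_fin_card[OF assms] by simp
  fix x y z assume xy: "x < y" and yz: "y < z" and nb: "\<forall>b\<in>B \<union> zs B g. \<not> (x < b \<and> b < z)"
  have gy: "g y = ((z - y) * g x + (y - x) * g z) / (z - x)"
    using plD[OF assms xy yz] nb by blast
  consider "g x \<ge> 0 \<and> g z \<ge> 0" | "g x \<le> 0 \<and> g z \<le> 0" | "g x > 0 \<and> g z < 0" | "g x < 0 \<and> g z > 0"
    by linarith
  then show "relu (g y) = ((z - y) * relu (g x) + (y - x) * relu (g z)) / (z - x)"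
  proof cases
    case 1
    have "g y \<ge> 0" unfolding gy using 1 xy yz by (intro divide_nonneg_pos add_nonneg_nonneg mult_nonneg_nonneg) auto
    then show ?thesis using 1 gy by (simp add: relu_nonneg)
  next
    case 2
    have "g y \<le> 0" unfolding gy using 2 xy yz by (intro divide_nonpos_pos add_nonpos_nonpos mult_nonneg_nonpos) auto
    then show ?thesis using 2 by (simp add: relu_nonpos)
  next
    case 3
    define p where "p = x + (z - x) * (g x / (g x - g z))"
    have q: "0 < g x / (g x - g z)" "g x / (g x - g z) < 1" using 3 by (auto simp: field_simps)
    have "0 < (z - x) * (g x / (g x - g z))" using q xy yz by (intro mult_pos_pos) auto
    then have xp: "x < p" unfolding p_def by linarith
    have "(z - x) * (g x / (g x - g z)) < (z - x) * 1"
      using q xy yz by (intro mult_strict_left_mono) auto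
    then have pz: "p < z" unfolding p_def by (simp only: mult_1_right)
    have gp: "g p = ((z - p) * g x + (p - x) * g z) / (z - x)"
      using plD[OF assms xp pz] nb by blast
    also have "\<dots> = 0" unfolding p_def using 3 xy yz by (simp add: field_simps)
    finally have "p \<in> zs B g" unfolding zs_def using nb xp pz 3
      by (auto intro!: exI[of _ x])
    then show ?thesis using nb xp pz by blast
  next
    case 4
    define p where "p = x + (z - x) * (g x / (g x - g z))"
    have q: "0 < g x / (g x - g z)" "g x / (g x - g z) < 1" using 4 by (auto simp: field_simps)
    have "0 < (z - x) * (g x / (g x - g z))" using q xy yz by (intro mult_pos_pos) auto
    then have xp: "x < p" unfolding p_def by linarith
    have "(z - x) * (g x / (g x - g z)) < (z - x) * 1"
      using q xy yz by (intro mult_strict_left_mono) auto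
    then have pz: "p < z" unfolding p_def by (simp only: mult_1_right)
    have gp: "g p = ((z - p) * g x + (p - x) * g z) / (z - x)"
      using plD[OF assms xp pz] nb by blast
    also have "\<dots> = 0" unfolding p_def using 4 xy yz by (simp add: field_simps)
    finally have "p \<in> zs B g" unfolding zs_def using nb xp pz 4
      by (auto intro!: exI[of _ x])
    then show ?thesis using nb xp pz by blast
  qed
qed



lemma layer_pl:
  assumes H: "\<And>i. pl B (\<lambda>t. H t i)"
  shows "\<exists>Bn. (\<forall>i. pl Bn (\<lambda>t. layer_apply wi (w, A, c) (H t) i)) \<and> card Bn + 1 \<le> (card B + 1) * (w + 1)"
proof -
  have fin: "finite B" using H[of 0] pl_def by blast
  define G where "G i t = (\<Sum>j<wi. A i j * H t j) + c i" for i t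
  have plG: "pl B (G i)" for i
    unfolding G_def by (intro pl_add pl_sum pl_scale H pl_const fin)
  define Bn where "Bn = B \<union> (\<Union>i<w. zs B (G i))"
  have finZ: "finite (zs B (G i))" and cardZ: "card (zs B (G i)) \<le> card B + 1" for i
    using zs_fin_card[OF plG[of i]] by auto
  have finBn: "finite Bn" unfolding Bn_def using fin finZ by auto
  have "pl Bn (\<lambda>t. layer_apply wi (w, A, c) (H t) i)" for i
  proof (cases "i < w")
    case True
    have "pl (B \<union> zs B (G i)) (\<lambda>t. relu (G i t))" by (rule pl_relu[OF plG])
    then have "pl Bn (\<lambda>t. relu (G i t))"
      by (rule pl_mono) (use True finBn in \<open>auto simp: Bn_def\<close>)
    then show ?thesis using True by (simp add: layer_apply_def G_def)
  next
    case False
    then show ?thesis using pl_const[OF finBn, of 0] by (simp add: layer_apply_def)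
  qed
  moreover have "card Bn \<le> card B + w * (card B + 1)"
  proof -
    have "card Bn \<le> card B + card (\<Union>i<w. zs B (G i))"
      unfolding Bn_def by (rule card_Un_le)
    also have "card (\<Union>i<w. zs B (G i)) \<le> (\<Sum>i<w. card (zs B (G i)))"
      by (rule card_UN_le) simp
    also have "\<dots> \<le> (\<Sum>i<w. card B + 1)" by (rule sum_mono) (rule cardZ)
    finally show ?thesis by simp
  qed
  then have "card Bn + 1 \<le> (card B + 1) * (w + 1)" by (simp add: algebra_simps)
  ultimately show ?thesis by blast
qed

lemma net_pl:
  "(\<forall>L\<in>set Ls. fst L = w) \<Longrightarrow> (\<And>i. pl B (\<lambda>t. H t i)) \<Longrightarrow>
   \<exists>B'. (\<forall>i. pl B' (\<lambda>t. snd (mlp_forward wi Ls (H t)) i)) \<and>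
        card B' + 1 \<le> (card B + 1) * (w + 1) ^ length Ls"
proof (induction Ls arbitrary: wi H B)
  case Nil
  then show ?case by auto
next
  case (Cons L Ls)
  obtain w' A c where L: "L = (w', A, c)" by (cases L) auto
  have w': "w' = w" using Cons.prems(1) L by simp
  obtain Bn where Bn: "\<And>i. pl Bn (\<lambda>t. layer_apply wi (w, A, c) (H t) i)"
    "card Bn + 1 \<le> (card B + 1) * (w + 1)"
    using layer_pl[of B H wi w A c] Cons.prems(2) by blast
  obtain B' where B': "\<forall>i. pl B' (\<lambda>t. snd (mlp_forward w Ls (layer_apply wi (w, A, c) (H t))) i)"
    "card B' + 1 \<le> (card Bn + 1) * (w + 1) ^ length Ls"
    using Cons.IH[where wi=w and H="\<lambda>t. layer_apply wi (w, A, c) (H t)" and B=Bn] Cons.prems(1) Bn(1) by auto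
  have "card B' + 1 \<le> (card B + 1) * (w + 1) * (w + 1) ^ length Ls"
    using B'(2) Bn(2) by (meson le_trans mult_le_mono1)
  then show ?case using B'(1) L w' by (auto simp: algebra_simps)
qed

lemma fst_forward: "fst (mlp_forward wi Ls h) = (if Ls = [] then wi else fst (last Ls))"
  by (induction Ls arbitrary: wi h) auto

definition mono_or :: "(real \<Rightarrow> real) \<Rightarrow> bool" where
  "mono_or f \<longleftrightarrow> mono f \<or> antimono f"

lemma mono_or_affine: "mono_or f \<Longrightarrow> mono_or (\<lambda>t. a * f t + k)"
  unfolding mono_or_def mono_def antimono_def
  by (cases "a \<ge> 0") (auto intro: mult_left_mono mult_left_mono_neg)

lemma relu_mono: "x \<le> y \<Longrightarrow> relu x \<le> relu y"
  by (auto simp: relu_def)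

lemma mono_or_relu: "mono_or f \<Longrightarrow> mono_or (\<lambda>t. relu (f t))"
  unfolding mono_or_def mono_def antimono_def by (auto intro: relu_mono)

lemma net_w1:
  "(\<forall>L\<in>set Ls. fst L = 1) \<Longrightarrow> wi \<ge> 1 \<Longrightarrow> mono_or (\<lambda>t. H t 0) \<Longrightarrow>
   (\<forall>j\<ge>1. \<forall>t t'. H t j = H t' j) \<Longrightarrow>
   mono_or (\<lambda>t. snd (mlp_forward wi Ls (H t)) 0)"
proof (induction Ls arbitrary: wi H)
  case Nil
  then show ?case by simp
next
  case (Cons L Ls)
  obtain A c where L: "L = (1, A, c)" using Cons.prems(1) by (cases L) auto
  obtain n where n: "wi = Suc n" using Cons.prems(2) by (cases wi) auto
  define K where "K = (\<Sum>j<n. A 0 (Suc j) * H 0 (Suc j))"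
  have sumeq: "(\<Sum>j<wi. A 0 j * H t j) = A 0 0 * H t 0 + K" for t
  proof -
    have "(\<Sum>j<wi. A 0 j * H t j) = A 0 0 * H t 0 + (\<Sum>j<n. A 0 (Suc j) * H t (Suc j))"
      unfolding n by (rule sum.lessThan_Suc_shift)
    also have "(\<Sum>j<n. A 0 (Suc j) * H t (Suc j)) = K"
      unfolding K_def using Cons.prems(4) by (intro sum.cong) auto
    finally show ?thesis .
  qed
  define H' where "H' t = layer_apply wi L (H t)" for t
  have H'0: "H' t 0 = relu (A 0 0 * H t 0 + (K + c 0))" for t
    unfolding H'_def L layer_apply_def using sumeq by (simp add: algebra_simps)
  have "mono_or (\<lambda>t. H' t 0)" unfolding H'0
    by (intro mono_or_relu mono_or_affine Cons.prems(3))
  moreover have "\<forall>j\<ge>1. \<forall>t t'. H' t j = H' t' j"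
    unfolding H'_def L layer_apply_def by auto
  ultimately have "mono_or (\<lambda>t. snd (mlp_forward 1 Ls (H' t)) 0)"
    using Cons.IH[where wi=1 and H=H'] Cons.prems(1) by auto
  then show ?case using L by (simp add: H'_def)
qed



definition Tm :: "real \<Rightarrow> real" where "Tm y = 2 * relu y - 4 * relu (y - 1/2)"
definition vec2 :: "real \<Rightarrow> nat \<Rightarrow> real" where
  "vec2 y = (\<lambda>i. if i = 0 then relu y else if i = 1 then relu (y - 1/2) else 0)"
definition L1 :: layer where "L1 = (2, \<lambda>i j. if j = 0 then 1 else 0, \<lambda>i. if i = 0 then 0 else -1/2)"
definition L2 :: layer where "L2 = (2, \<lambda>i j. if j = 0 then 2 else -4, \<lambda>i. if i = 0 then 0 else -1/2)"
definition net :: "nat \<Rightarrow> layer list" where "net m = L1 # replicate (m + 1) L2"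
definition vv :: "nat \<Rightarrow> real" where "vv i = (if i = 0 then 2 else -4)"
definition fm :: "nat \<Rightarrow> real \<times> real \<Rightarrow> int" where "fm m x = mlp_classifier (net m) vv (-1/2) x"

lemma fstL: "fst L1 = 2" "fst L2 = 2" by (simp_all add: L1_def L2_def)

lemma l1: "layer_apply 2 L1 (input_vec (t, s)) = vec2 t"
  by (auto simp: layer_apply_def L1_def vec2_def input_vec_def numeral_2_eq_2 fun_eq_iff)

lemma l2: "layer_apply 2 L2 (vec2 y) = vec2 (Tm y)"
  by (auto simp: layer_apply_def L2_def vec2_def Tm_def numeral_2_eq_2 fun_eq_iff)

lemma rep: "mlp_forward 2 (replicate n L2) (vec2 y) = (2, vec2 ((Tm ^^ n) y))"
proof (induction n arbitrary: y)
  case 0 then show ?case by simp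
next
  case (Suc n)
  have "mlp_forward 2 (replicate (Suc n) L2) (vec2 y) = mlp_forward 2 (replicate n L2) (vec2 (Tm y))"
    by (simp add: l2 fstL)
  also have "\<dots> = (2, vec2 ((Tm ^^ Suc n) y))" using Suc by (simp add: funpow_swap1)
  finally show ?case .
qed

lemma fm_eq: "fm m (t, s) = (if (Tm ^^ (m + 2)) t > 1/2 then 1 else -1)"
proof -
  have "mlp_forward 2 (net m) (input_vec (t, s)) = (2, vec2 ((Tm ^^ (m + 1)) t))"
    unfolding net_def by (simp only: mlp_forward.simps fstL l1 rep)
  moreover have "(\<Sum>i<2. vv i * vec2 z i) + (-1/2) = Tm z - 1/2" for z
    by (simp add: numeral_2_eq_2 vv_def vec2_def Tm_def)
  moreover have "Tm ((Tm ^^ (m + 1)) t) = (Tm ^^ (m + 2)) t" by simp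
  ultimately show ?thesis by (simp add: fm_def mlp_classifier_def)
qed

lemma grid: "k \<le> 2 ^ M \<Longrightarrow> (Tm ^^ M) (real k / 2 ^ M) = (if odd k then 1 else 0)"
proof (induction M arbitrary: k)
  case 0
  then have "k = 0 \<or> k = 1" by auto
  then show ?case by auto
next
  case (Suc M)
  show ?case
  proof (cases "k \<le> 2 ^ M")
    case True
    have "Tm (real k / 2 ^ Suc M) = real k / 2 ^ M"
    proof -
      have "real k / 2 ^ Suc M \<le> 1/2" using True by (simp add: field_simps)
      then show ?thesis by (simp add: Tm_def relu_def field_simps)
    qed
    then show ?thesis using Suc.IH[OF True] by (simp add: funpow_Suc_right del: funpow.simps)
  next
    case False
    define k' where "k' = 2 ^ Suc M - k"
    have k': "k' \<le> 2 ^ M" using False Suc.prems unfolding k'_def by simp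
    have rk: "real k' = 2 ^ Suc M - real k" unfolding k'_def using Suc.prems by (simp add: of_nat_diff)
    have tk: "Tm (real k / 2 ^ Suc M) = real k' / 2 ^ M"
    proof -
      have "real k / 2 ^ Suc M > 1/2" using False by (simp add: field_simps)
      then show ?thesis unfolding rk by (simp add: Tm_def relu_def field_simps)
    qed
    have "k' + k = 2 ^ Suc M" unfolding k'_def using Suc.prems by simp
    then have "even (k' + k)" by simp
    then have "odd k' \<longleftrightarrow> odd k" by simp
    then show ?thesis using Suc.IH[OF k'] tk by (simp add: funpow_Suc_right del: funpow.simps)
  qed
qed



lemma lower:
  assumes d: "d \<ge> 1" and m: "m \<ge> 1" and len: "length Ls = d" and wid: "\<forall>L\<in>set Ls. fst L = w"
    and eqf: "\<forall>x. mlp_classifier Ls v v0 x = fm m x"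
  shows "root (2 * d) 2 ^ m \<le> real w"
proof -
  define M where "M = m + 2"
  define tk where "tk k = real k / 2 ^ M" for k :: nat
  define H where "H t = input_vec (t, 0)" for t
  define wd where "wd = fst (last Ls)"
  have Lne: "Ls \<noteq> []" using d len by auto
  have fw: "fst (mlp_forward 2 Ls h) = wd" for h using fst_forward[of 2 Ls h] Lne wd_def by simp
  define y where "y t = (\<Sum>i<wd. v i * snd (mlp_forward 2 Ls (H t)) i) + v0" for t
  have cls: "mlp_classifier Ls v v0 (t, 0) = (if y t > 0 then 1 else -1)" for t
  proof -
    have "mlp_forward 2 Ls (input_vec (t, 0)) = (wd, snd (mlp_forward 2 Ls (H t)))"
      using fw[of "H t"] H_def by (metis prod.collapse)
    then show ?thesis by (simp add: mlp_classifier_def y_def)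
  qed
  have ypos: "y (tk k) > 0 \<longleftrightarrow> odd k" if "k \<le> 2 ^ M" for k
  proof -
    have "mlp_classifier Ls v v0 (tk k, 0) = fm m (tk k, 0)" using eqf by blast
    also have "\<dots> = (if odd k then 1 else -1)"
      unfolding fm_eq using grid[OF that] by (simp add: tk_def M_def)
    finally show ?thesis unfolding cls by (auto split: if_splits)
  qed
  have t_mono: "tk a < tk b" if "a < b" for a b
    unfolding tk_def using that by (simp add: divide_strict_right_mono)
  have N2: "(2::nat) \<le> 2 ^ M" unfolding M_def by simp
  show ?thesis
  proof (cases "w = 1")
    case True
    have "mono_or (\<lambda>t. snd (mlp_forward 2 Ls (H t)) 0)"
    proof (rule net_w1)
      show "\<forall>L\<in>set Ls. fst L = 1" using wid True by simp
      show "mono_or (\<lambda>t. H t 0)" by (simp add: H_def input_vec_def mono_or_def mono_def)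
      show "\<forall>j\<ge>1. \<forall>t t'. H t j = H t' j" by (simp add: H_def input_vec_def)
    qed simp
    then have mo: "mono_or (\<lambda>t. v 0 * snd (mlp_forward 2 Ls (H t)) 0 + v0)" by (rule mono_or_affine)
    have wd1: "wd = 1" using wid True Lne wd_def by simp
    have yeq: "y = (\<lambda>t. v 0 * snd (mlp_forward 2 Ls (H t)) 0 + v0)"
      unfolding y_def wd1 by simp
    have a0: "\<not> y (tk 0) > 0" using ypos[of 0] by simp
    have a1: "y (tk 1) > 0" using ypos[of 1] N2 by simp
    have a2: "\<not> y (tk 2) > 0" using ypos[of 2] N2 by simp
    have "tk 0 \<le> tk 1" "tk 1 \<le> tk 2" using t_mono[of 0 1] t_mono[of 1 2] by auto
    then show ?thesis using mo a0 a1 a2 unfolding yeq mono_or_def mono_def antimono_def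
      by (meson dual_order.strict_trans2 not_less)
  next
    case False
    have plH: "pl {} (\<lambda>t. H t i)" for i
    proof -
      have "(\<lambda>t. H t i) = (if i = 0 then (\<lambda>t. t) else (\<lambda>t. 0))"
        by (auto simp: H_def input_vec_def fun_eq_iff)
      then show ?thesis by (simp add: pl_id pl_const)
    qed
    obtain B where B: "\<forall>i. pl B (\<lambda>t. snd (mlp_forward 2 Ls (H t)) i)"
        "card B + 1 \<le> (card ({}::real set) + 1) * (w + 1) ^ length Ls"
      using net_pl[OF wid, of "{}" H 2] plH by blast
    have finB: "finite B" using B(1) pl_def by blast
    have ply: "pl B y" unfolding y_def
      by (intro pl_add pl_sum pl_scale pl_const finB) (use B(1) in blast)
    have ex: "\<exists>b\<in>B. tk (2*j) < b \<and> b < tk (2*j+2)" if j: "j < 2 ^ (m+1)" for j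
    proof (rule pl_alt[OF ply, of _ "tk (2*j+1)"])
      have le: "2*j+2 \<le> 2 ^ M" using j unfolding M_def by simp
      show "tk (2 * j) < tk (2 * j + 1)" "tk (2 * j + 1) < tk (2 * j + 2)" by (auto intro: t_mono)
      show "y (tk (2 * j)) \<le> 0" using ypos[of "2*j"] le by simp
      show "y (tk (2 * j + 1)) > 0" using ypos[of "2*j+1"] le by simp
      show "y (tk (2 * j + 2)) \<le> 0" using ypos[of "2*j+2"] le by simp
    qed
    define p where "p j = (SOME b. b \<in> B \<and> tk (2*j) < b \<and> b < tk (2*j+2))" for j
    have p: "p j \<in> B \<and> tk (2*j) < p j \<and> p j < tk (2*j+2)" if "j < 2 ^ (m+1)" for j
      unfolding p_def using someI_ex[OF ex[OF that, unfolded Bex_def]] .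
    have inj: "inj_on p {..<2 ^ (m+1)}"
    proof (rule inj_onI, rule ccontr)
      fix a c assume a: "a \<in> {..<2 ^ (m+1)}" and c: "c \<in> {..<2 ^ (m+1)}" and e: "p a = p c" and ne: "a \<noteq> c"
      have lt: "p i < p j" if "i < j" "i < 2 ^ (m+1)" "j < 2 ^ (m+1)" for i j
      proof -
        have "p i < tk (2*i+2)" using p[OF that(2)] by blast
        also have "tk (2*i+2) \<le> tk (2*j)" using t_mono[of "2*i+2" "2*j"] that(1)
          by (cases "2*i+2 = 2*j") auto
        also have "\<dots> < p j" using p[OF that(3)] by blast
        finally show ?thesis .
      qed
      show False using ne e lt[of a c] lt[of c a] a c by (cases "a < c") auto
    qed
    have "p ` {..<2 ^ (m+1)} \<subseteq> B" using p by auto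
    then have "card (p ` {..<2 ^ (m+1)}) \<le> card B" using finB by (rule card_mono[rotated])
    then have cB: "2 ^ (m+1) \<le> card B" using card_image[OF inj] by simp
    have big: "2 ^ (m+1) < (w + 1) ^ d" using cB B(2) len by simp
    have "w \<noteq> 0"
    proof
      assume "w = 0"
      then have "(w + 1) ^ d = 1" by simp
      moreover have "(1::nat) < 2 ^ (m+1)" using one_less_power[of "2::nat" "m+1"] by simp
      ultimately show False using big by linarith
    qed
    then have w2: "w \<ge> 2" using False by simp
    have "2 * w \<le> w * w" using w2 by (rule mult_right_mono) simp
    then have "w + 1 \<le> w ^ 2" using w2 unfolding power2_eq_square by linarith
    then have "(w + 1) ^ d \<le> (w ^ 2) ^ d" by (rule power_mono) simp
    then have "2 ^ m < w ^ (2 * d)" using big by (simp add: power_mult)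
    then have "real (2 ^ m) < real (w ^ (2 * d))" by (simp only: of_nat_less_iff)
    then have rlt: "(2::real) ^ m < real w ^ (2 * d)" by (simp only: of_nat_power of_nat_numeral)
    have rp: "root (2 * d) 2 ^ (2 * d) = (2::real)"
      using real_root_pow_pos2[of "2*d" 2] d by linarith
    have "(root (2 * d) 2 ^ m) ^ (2 * d) = (root (2 * d) 2 ^ (2 * d)) ^ m"
      by (simp only: power_mult[symmetric] mult.commute)
    also have "\<dots> = (2::real) ^ m" by (simp only: rp)
    finally have "(root (2 * d) 2 ^ m) ^ (2 * d) < real w ^ (2 * d)" using rlt by (simp only:)
    then have "root (2 * d) 2 ^ m < real w" by (rule power_less_imp_less_base) simp
    then show ?thesis by (rule less_imp_le)
  qed
qed

theorem theorem1:
  shows "\<exists>f :: nat \<Rightarrow> real \<times> real \<Rightarrow> int.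
    (\<forall>m\<ge>1. \<forall>x. f m x \<in> {-1, 1}) \<and>
    (\<forall>d\<ge>1. \<exists>b::real. b > 1 \<and>
       (\<forall>m\<ge>1. \<forall>(Ls :: layer list) v v0 (w::nat).
          length Ls = d \<longrightarrow> (\<forall>L\<in>set Ls. fst L = w) \<longrightarrow>
          (\<forall>x. mlp_classifier Ls v v0 x = f m x) \<longrightarrow>
          real w \<ge> b ^ m)) \<and>
    (\<forall>m\<ge>1. \<exists>(Ls :: layer list) v v0.
          length Ls = m + 2 \<and> (\<forall>L\<in>set Ls. fst L \<le> 4) \<and>
          (\<forall>x. mlp_classifier Ls v v0 x = f m x))"
proof (intro exI[of _ fm] conjI allI impI)
  fix m x
  show "fm m x \<in> {-1, 1}"
    by (simp add: fm_def mlp_classifier_def split: prod.split)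
next
  fix d :: nat assume d: "d \<ge> 1"
  show "\<exists>b::real. b > 1 \<and>
       (\<forall>m\<ge>1. \<forall>(Ls :: layer list) v v0 (w::nat).
          length Ls = d \<longrightarrow> (\<forall>L\<in>set Ls. fst L = w) \<longrightarrow>
          (\<forall>x. mlp_classifier Ls v v0 x = fm m x) \<longrightarrow>
          real w \<ge> b ^ m)"
  proof (intro exI[of _ "root (2 * d) 2"] conjI allI impI)
    show "root (2 * d) 2 > (1::real)" using d by simp
  next
    fix m Ls v v0 w
    assume "m \<ge> 1" "length Ls = d" "\<forall>L\<in>set Ls. fst L = w" "\<forall>x. mlp_classifier Ls v v0 x = fm m x"
    then show "root (2 * d) 2 ^ m \<le> real w" using lower[OF d] by blast
  qed
next
  fix m :: nat
  show "\<exists>(Ls :: layer list) v v0.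
          length Ls = m + 2 \<and> (\<forall>L\<in>set Ls. fst L \<le> 4) \<and>
          (\<forall>x. mlp_classifier Ls v v0 x = fm m x)"
    by (intro exI[of _ "net m"] exI[of _ vv] exI[of _ "-1/2"])
       (auto simp: net_def fstL fm_def)
qed

end
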